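(* Let $n,m$ be positive integers and $\mathbf a=(a_1,\dots,a_n),\mathbf b=(b_1,\dots,b_n)\in\mathbb N^n$. Let $b_{n+1}=\sum_{i=1}^n(a_i-b_i)$, $\mathbf a'=(a_1-b_1,a_2,\dots,a_n,0)$ and $\mathbf b'=(0,b_2,\dots,b_n,b_{n+1})$. Then $\mathcal F_{G(n,m)}(\mathbf a,\mathbf b)$ is integrally equivalent to $\mathcal F_{H(n,m)}(\mathbf a',\mathbf b')$.
   Context: $G(n,m)$ has vertex set $\{(i,j):1\le i\le n,0\le j\le m\}\cup\{s\}$ and edges $((i,j),(i,j+1))$ ($1\le i\le n$, $0\le j\le m-1$), $((i,j),(i+1,j))$ ($1\le i\le n-1$, $0\le j\le m$), $((n,j),s)$ ($0\le j\le m$); $\mathcal F_{G(n,m)}(\mathbf a,\mathbf b)$ is the set of nonnegative real edge weightings with outflow minus inflow $a_i$ at $(i,0)$, $-b_i$ at $(i,m)$, $-\sum a_i+\sum b_i$ at $s$, $0$ elsewhere. $H(n,m)$ is the directed grid graph with vertex set $\{(i,j):1\le i\le n+1,0\le j\le m\}$ and edges $((i,j),(i,j+1))$ ($1\le i\le n+1$, $0\le j\le m-1$) and $((i,j),(i+1,j))$ ($1\le i\le n$, $0\le j\le m$). For $\mathbf a'=(a'_1,\dots,a'_{n+1})$, $\mathbf b'=(b'_1,\dots,b'_{n+1})$ with equal sums, $\mathcal F_{H(n,m)}(\mathbf a',\mathbf b')$ is the set of nonnegative real edge weightings with outflow minus inflow $a'_i$ at $(i,0)$, $-b'_i$ at $(i,m)$,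 and $0$ elsewhere. Integral equivalence: an affine map restricting to a bijection between the polytopes that preserves the lattice. *)

theory Defs
  imports Complex_Main
begin

definition netflow :: "('v \<times> 'v) set \<Rightarrow> (('v \<times> 'v) \<Rightarrow> real) \<Rightarrow> 'v \<Rightarrow> real" where
  "netflow E w v = (\<Sum>e\<in>{e\<in>E. fst e = v}. w e) - (\<Sum>e\<in>{e\<in>E. snd e = v}. w e)"

(* Flow polytope: nonnegative real edge weightings (vanishing off E, i.e. points of R^E)
   with prescribed net flow d v at every vertex v \<in> V. *)
definition flow_polytope ::
  "'v set \<Rightarrow> ('v \<times> 'v) set \<Rightarrow> ('v \<Rightarrow> real) \<Rightarrow> ((('v \<times> 'v) \<Rightarrow> real) set)" where
  "flow_polytope V E d =
     {w. (\<forall>e. e \<notin> E \<longrightarrow> w e = 0) \<and> (\<forall>e\<in>E. 0 \<le> w e) \<and> (\<forall>v\<in>V. netflow E w v = d v)}"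

(* The graph G(n,m): vertex Some (i,j) is (i,j), vertex None is the sink s. *)
definition vertsG :: "nat \<Rightarrow> nat \<Rightarrow> (nat \<times> nat) option set" where
  "vertsG n m = {Some (i, j) | i j. 1 \<le> i \<and> i \<le> n \<and> j \<le> m} \<union> {None}"

definition edgesG :: "nat \<Rightarrow> nat \<Rightarrow> ((nat \<times> nat) option \<times> (nat \<times> nat) option) set" where
  "edgesG n m =
     {(Some (i, j), Some (i, j + 1)) | i j. 1 \<le> i \<and> i \<le> n \<and> j < m}
   \<union> {(Some (i, j), Some (i + 1, j)) | i j. 1 \<le> i \<and> i < n \<and> j \<le> m}
   \<union> {(Some (n, j), None) | j. j \<le> m}"

definition demandG :: "nat \<Rightarrow> nat \<Rightarrow> (nat \<Rightarrow> real) \<Rightarrow> (nat \<Rightarrow> real) \<Rightarrow> (nat \<times> nat) option \<Rightarrow> real" where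
  "demandG n m a b v = (case v of
      None \<Rightarrow> - (\<Sum>i=1..n. a i) + (\<Sum>i=1..n. b i)
    | Some (i, j) \<Rightarrow> (if j = 0 then a i else 0) - (if j = m then b i else 0))"

definition flowG :: "nat \<Rightarrow> nat \<Rightarrow> (nat \<Rightarrow> real) \<Rightarrow> (nat \<Rightarrow> real)
    \<Rightarrow> ((((nat \<times> nat) option \<times> (nat \<times> nat) option) \<Rightarrow> real) set)" where
  "flowG n m a b = flow_polytope (vertsG n m) (edgesG n m) (demandG n m a b)"

definition vertsH :: "nat \<Rightarrow> nat \<Rightarrow> (nat \<times> nat) set" where
  "vertsH n m = {(i, j) | i j. 1 \<le> i \<and> i \<le> n + 1 \<and> j \<le> m}"

definition edgesH :: "nat \<Rightarrow> nat \<Rightarrow> ((nat \<times> nat) \<times> (nat \<times> nat)) set" where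
  "edgesH n m =
     {((i, j), (i, j + 1)) | i j. 1 \<le> i \<and> i \<le> n + 1 \<and> j < m}
   \<union> {((i, j), (i + 1, j)) | i j. 1 \<le> i \<and> i \<le> n \<and> j \<le> m}"

definition demandH :: "nat \<Rightarrow> nat \<Rightarrow> (nat \<Rightarrow> real) \<Rightarrow> (nat \<Rightarrow> real) \<Rightarrow> nat \<times> nat \<Rightarrow> real" where
  "demandH n m a' b' v = (case v of (i, j) \<Rightarrow>
      (if j = 0 then a' i else 0) - (if j = m then b' i else 0))"

definition flowH :: "nat \<Rightarrow> nat \<Rightarrow> (nat \<Rightarrow> real) \<Rightarrow> (nat \<Rightarrow> real)
    \<Rightarrow> ((((nat \<times> nat) \<times> (nat \<times> nat)) \<Rightarrow> real) set)" where
  "flowH n m a' b' = flow_polytope (vertsH n m) (edgesH n m) (demandH n m a' b')"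

definition aff_hull :: "('e \<Rightarrow> real) set \<Rightarrow> ('e \<Rightarrow> real) set" where
  "aff_hull P = {y. \<exists>S u. finite S \<and> S \<subseteq> P \<and> sum u S = 1 \<and> y = (\<lambda>e. \<Sum>x\<in>S. u x * x e)}"

definition int_points :: "('e \<Rightarrow> real) set" where
  "int_points = {x. \<forall>e. x e \<in> \<int>}"

definition affine_map :: "'e1 set \<Rightarrow> 'e2 set \<Rightarrow> ('e2 \<Rightarrow> real) \<Rightarrow> ('e2 \<Rightarrow> 'e1 \<Rightarrow> real)
    \<Rightarrow> ('e1 \<Rightarrow> real) \<Rightarrow> ('e2 \<Rightarrow> real)" where
  "affine_map E1 E2 c M x = (\<lambda>e'. if e' \<in> E2 then c e' + (\<Sum>e\<in>E1. M e' e * x e) else 0)"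

definition integrally_equivalent ::
  "'e1 set \<Rightarrow> ('e1 \<Rightarrow> real) set \<Rightarrow> 'e2 set \<Rightarrow> ('e2 \<Rightarrow> real) set \<Rightarrow> bool" where
  "integrally_equivalent E1 P E2 Q \<longleftrightarrow>
     (\<exists>c M. bij_betw (affine_map E1 E2 c M) P Q \<and>
            bij_betw (affine_map E1 E2 c M) (aff_hull P \<inter> int_points) (aff_hull Q \<inter> int_points))"

end

theory Submission imports Defs begin

lemma netflowG_Some:
  assumes "1 \<le> i" "i \<le> n" "j \<le> m"
  shows "netflow (edgesG n m) w (Some (i,j)) =
     (if j < m then w (Some (i,j), Some (i,j+1)) else 0)
   + (if i < n then w (Some (i,j), Some (i+1,j)) else w (Some (i,j), None))
   - (if 0 < j then w (Some (i,j-1), Some (i,j)) else 0)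
   - (if 1 < i then w (Some (i-1,j), Some (i,j)) else 0)"
proof -
  have o: "{e\<in>edgesG n m. fst e = Some (i,j)} =
     (if j < m then {(Some (i,j), Some (i,j+1))} else {})
   \<union> (if i < n then {(Some (i,j), Some (i+1,j))} else {(Some (i,j), None)})"
    using assms by (auto simp: edgesG_def split: if_splits)
  have inn: "{e\<in>edgesG n m. snd e = Some (i,j)} =
     (if 0 < j then {(Some (i,j-1), Some (i,j))} else {})
   \<union> (if 1 < i then {(Some (i-1,j), Some (i,j))} else {})"
    using assms by (auto simp: edgesG_def split: if_splits)
  show ?thesis unfolding netflow_def o inn
    by (cases "j < m"; cases "i < n"; cases "0 < j"; cases "1 < i") auto
qed

lemma netflowG_None:
  shows "netflow (edgesG n m) w None = - (\<Sum>j\<le>m. w (Some (n,j), None))"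
proof -
  have o: "{e\<in>edgesG n m. fst e = None} = {}"
    by (auto simp: edgesG_def)
  have inn: "{e\<in>edgesG n m. snd e = None} = (\<lambda>j. (Some (n,j), None)) ` {..m}"
    by (auto simp: edgesG_def)
  show ?thesis unfolding netflow_def o inn
    by (simp add: sum.reindex inj_on_def)
qed

lemma netflowH:
  assumes "1 \<le> i" "i \<le> n+1" "j \<le> m"
  shows "netflow (edgesH n m) w (i,j) =
     (if j < m then w ((i,j), (i,j+1)) else 0)
   + (if i \<le> n then w ((i,j), (i+1,j)) else 0)
   - (if 0 < j then w ((i,j-1), (i,j)) else 0)
   - (if 1 < i then w ((i-1,j), (i,j)) else 0)"
proof -
  have o: "{e\<in>edgesH n m. fst e = (i,j)} =
     (if j < m then {((i,j), (i,j+1))} else {})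
   \<union> (if i \<le> n then {((i,j), (i+1,j))} else {})"
    using assms by (auto simp: edgesH_def split: if_splits)
  have inn: "{e\<in>edgesH n m. snd e = (i,j)} =
     (if 0 < j then {((i,j-1), (i,j))} else {})
   \<union> (if 1 < i then {((i-1,j), (i,j))} else {})"
    using assms by (auto simp: edgesH_def split: if_splits)
  show ?thesis unfolding netflow_def o inn
    by (cases "j < m"; cases "i \<le> n"; cases "0 < j"; cases "1 < i") auto
qed

definition Fm :: "nat \<Rightarrow> nat \<Rightarrow> real \<Rightarrow> (((nat \<times> nat) option \<times> (nat \<times> nat) option) \<Rightarrow> real)
   \<Rightarrow> ((nat \<times> nat) \<times> (nat \<times> nat)) \<Rightarrow> real" where
  "Fm n m c x e' = (if e' \<in> edgesH n m then (case e' of ((i,j),(i',j')) \<Rightarrow>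
      if i = n+1 then (\<Sum>k\<le>j. x (Some (n,k), None))
      else if i' = n+1 then x (Some (n,j), None)
      else if i = 1 \<and> i' = 1 then x (Some (i,j), Some (i',j')) - c
      else x (Some (i,j), Some (i',j'))) else 0)"

lemma Fm_h:
  "1 \<le> i \<Longrightarrow> i \<le> n+1 \<Longrightarrow> j < m \<Longrightarrow> 1 \<le> n \<Longrightarrow>
   Fm n m c x ((i,j),(i,Suc j)) = (if i = n+1 then (\<Sum>k\<le>j. x (Some (n,k), None))
     else if i = 1 then x (Some (1,j), Some (1,Suc j)) - c else x (Some (i,j), Some (i,Suc j)))"
  by (auto simp: Fm_def edgesH_def)

lemma Fm_v:
  "1 \<le> i \<Longrightarrow> i \<le> n \<Longrightarrow> j \<le> m \<Longrightarrow>
   Fm n m c x ((i,j),(Suc i,j)) = (if i = n then x (Some (n,j), None) else x (Some (i,j), Some (Suc i,j)))"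
  by (auto simp: Fm_def edgesH_def)

lemma memG_h: "(Some (i,j), Some (i,Suc j)) \<in> edgesG n m \<longleftrightarrow> 1 \<le> i \<and> i \<le> n \<and> j < m"
  by (auto simp: edgesG_def)
lemma memG_v: "(Some (i,j), Some (Suc i,j)) \<in> edgesG n m \<longleftrightarrow> 1 \<le> i \<and> i < n \<and> j \<le> m"
  by (auto simp: edgesG_def)
lemma memG_s: "(Some (i,j), None) \<in> edgesG n m \<longleftrightarrow> i = n \<and> j \<le> m"
  by (auto simp: edgesG_def)

lemma row1_ge:
  assumes n: "1 \<le> n" and x: "x \<in> flowG n m A B" and j: "j < m"
  shows "x (Some (1,j), Some (1,Suc j)) \<ge> B 1"
proof -
  have nn: "\<And>e. e \<in> edgesG n m \<Longrightarrow> 0 \<le> x e" and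
    nf: "\<And>v. v \<in> vertsG n m \<Longrightarrow> netflow (edgesG n m) x v = demandG n m A B v"
    using x by (auto simp: flowG_def flow_polytope_def)
  have step: "x (Some (1,k), Some (1,Suc k)) \<ge> (if Suc k < m then x (Some (1,Suc k), Some (1,Suc (Suc k))) else B 1)"
    if k: "k < m" for k
  proof -
    have "netflow (edgesG n m) x (Some (1, Suc k)) = demandG n m A B (Some (1, Suc k))"
      using k n by (intro nf) (auto simp: vertsG_def)
    moreover have "0 \<le> x (Some (1,Suc k), Some (Suc 1,Suc k))" if "1 < n"
      using k n that nn[of "(Some (1,Suc k), Some (Suc 1,Suc k))"] by (auto simp: memG_v)
    moreover have "0 \<le> x (Some (1,Suc k), None)" if "1 = n"
      using k n that nn[of "(Some (1,Suc k), None)"] by (auto simp: memG_s)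
    ultimately show ?thesis using k n by (auto simp: netflowG_Some demandG_def split: if_splits)
  qed
  have "\<forall>j. j < m \<longrightarrow> m - Suc j = d \<longrightarrow> x (Some (1,j), Some (1,Suc j)) \<ge> B 1" for d
  proof (induction d)
    case 0
    then show ?case using step by fastforce
  next
    case (Suc d)
    show ?case
    proof (intro allI impI)
      fix j assume "j < m" "m - Suc j = Suc d"
      then have "Suc j < m" "m - Suc (Suc j) = d" by auto
      then show "B 1 \<le> x (Some (1,j), Some (1,Suc j))" using Suc.IH step[of j] by force
    qed
  qed
  then show ?thesis using j by blast
qed

lemma rowN_H:
  assumes n: "1 \<le> n" and z: "z \<in> flowH n m a' b'" and a0: "a' (Suc n) = 0"
  shows "j < m \<Longrightarrow> z ((Suc n,j),(Suc n,Suc j)) = (\<Sum>k\<le>j. z ((n,k),(Suc n,k)))"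
proof (induction j)
  have nf: "\<And>v. v \<in> vertsH n m \<Longrightarrow> netflow (edgesH n m) z v = demandH n m a' b' v"
    using z by (auto simp: flowH_def flow_polytope_def)
  {
    case 0
    have "netflow (edgesH n m) z (Suc n, 0) = demandH n m a' b' (Suc n, 0)"
      using 0 by (intro nf) (auto simp: vertsH_def)
    then show ?case using 0 n a0 by (simp add: netflowH demandH_def)
  next
    case (Suc j)
    have "netflow (edgesH n m) z (Suc n, Suc j) = demandH n m a' b' (Suc n, Suc j)"
      using Suc by (intro nf) (auto simp: vertsH_def)
    then show ?case using Suc n a0 by (simp add: netflowH demandH_def)
  }
qed

lemma fwd:
  fixes A B :: "nat \<Rightarrow> real"
  assumes n: "1 \<le> n" and m: "1 \<le> m" and x: "x \<in> flowG n m A B"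
  defines "a' \<equiv> (\<lambda>i. if i = 1 then A 1 - B 1 else if i \<le> n then A i else 0)"
      and "b' \<equiv> (\<lambda>i. if i = 1 then 0 else if i \<le> n then B i else (\<Sum>i=1..n. A i - B i))"
  shows "Fm n m (B 1) x \<in> flowH n m a' b'"
proof -
  have nn: "\<And>e. e \<in> edgesG n m \<Longrightarrow> 0 \<le> x e" and
    nf: "\<And>v. v \<in> vertsG n m \<Longrightarrow> netflow (edgesG n m) x v = demandG n m A B v"
    using x by (auto simp: flowG_def flow_polytope_def)
  have r1: "\<And>j. j < m \<Longrightarrow> x (Some (1,j), Some (1,Suc j)) \<ge> B 1"
    using row1_ge[OF n x] by blast
  have sink: "(\<Sum>j\<le>m. x (Some (n,j), None)) = (\<Sum>i=1..n. A i - B i)"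
    using nf[of None] by (simp add: vertsG_def netflowG_None demandG_def sum_subtractf)
  have A1: "\<forall>e. e \<notin> edgesH n m \<longrightarrow> Fm n m (B 1) x e = 0"
    by (simp add: Fm_def)
  have A2: "\<forall>e\<in>edgesH n m. 0 \<le> Fm n m (B 1) x e"
  proof
    fix e assume e: "e \<in> edgesH n m"
    then obtain i j where "(e = ((i,j),(i,Suc j)) \<and> 1 \<le> i \<and> i \<le> n+1 \<and> j < m)
       \<or> (e = ((i,j),(Suc i,j)) \<and> 1 \<le> i \<and> i \<le> n \<and> j \<le> m)"
      by (auto simp: edgesH_def)
    then show "0 \<le> Fm n m (B 1) x e"
    proof (elim disjE conjE)
      assume h: "e = ((i,j),(i,Suc j))" "1 \<le> i" "i \<le> n+1" "j < m"
      have "0 \<le> (\<Sum>k\<le>j. x (Some (n,k), None))"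
        using h by (intro sum_nonneg nn) (auto simp: memG_s)
      moreover have "0 \<le> x (Some (1,j), Some (1,Suc j)) - B 1" using r1 h by simp
      moreover have "i \<noteq> n+1 \<Longrightarrow> 0 \<le> x (Some (i,j), Some (i,Suc j))"
        using h by (intro nn) (auto simp: memG_h)
      ultimately show ?thesis using h n by (simp add: Fm_h)
    next
      assume h: "e = ((i,j),(Suc i,j))" "1 \<le> i" "i \<le> n" "j \<le> m"
      have "0 \<le> x (Some (n,j), None)" using h by (intro nn) (auto simp: memG_s)
      moreover have "i \<noteq> n \<Longrightarrow> 0 \<le> x (Some (i,j), Some (Suc i,j))"
        using h by (intro nn) (auto simp: memG_v)
      ultimately show ?thesis using h n by (simp add: Fm_v)
    qed
  qed
  have A3: "\<forall>v\<in>vertsH n m. netflow (edgesH n m) (Fm n m (B 1) x) v = demandH n m a' b' v"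
  proof
    fix v assume "v \<in> vertsH n m"
    then obtain i j where v: "v = (i,j)" "1 \<le> i" "i \<le> n+1" "j \<le> m" by (auto simp: vertsH_def)
    consider "i = n+1" | "i = 1" | "1 < i" "i \<le> n" using v n by linarith
    then show "netflow (edgesH n m) (Fm n m (B 1) x) v = demandH n m a' b' v"
    proof cases
      case 1
      show ?thesis
      proof (cases j)
        case 0
        then show ?thesis using 1 v n m by (simp add: netflowH Fm_h Fm_v demandH_def a'_def b'_def)
      next
        case (Suc j0)
        show ?thesis
        proof (cases "j = m")
          case True
          then have mj: "m = Suc j0" using Suc by simp
          show ?thesis using 1 v n m Suc sink unfolding mj
            by (simp add: netflowH Fm_h Fm_v demandH_def a'_def b'_def)
        next
          case False
          then show ?thesis using 1 v n m Suc sink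
            by (simp add: netflowH Fm_h Fm_v demandH_def a'_def b'_def)
        qed
      qed
    next
      case 2
      have g: "netflow (edgesG n m) x (Some (i,j)) = demandG n m A B (Some (i,j))"
        using v n 2 by (intro nf) (auto simp: vertsG_def)
      show ?thesis
      proof (cases j)
        case 0
        then show ?thesis using g 2 v n m by (cases "1 < n") (auto simp: netflowH netflowG_Some Fm_h Fm_v demandH_def demandG_def a'_def b'_def)
      next
        case (Suc j0)
        then show ?thesis using g 2 v n m by (cases "1 < n") (auto simp: netflowH netflowG_Some Fm_h Fm_v demandH_def demandG_def a'_def b'_def)
      qed
    next
      case 3
      have g: "netflow (edgesG n m) x (Some (i,j)) = demandG n m A B (Some (i,j))"
        using v n 3 by (intro nf) (auto simp: vertsG_def)
      obtain i0 where i0: "i = Suc i0" "1 \<le> i0" using 3 by (cases i) auto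
      show ?thesis
      proof (cases j)
        case 0
        then show ?thesis using g 3 i0 v n m by (cases "i < n") (auto simp: netflowH netflowG_Some Fm_h Fm_v demandH_def demandG_def a'_def b'_def)
      next
        case (Suc j0)
        then show ?thesis using g 3 i0 v n m by (cases "i < n") (auto simp: netflowH netflowG_Some Fm_h Fm_v demandH_def demandG_def a'_def b'_def)
      qed
    qed
  qed
  show ?thesis using A1 A2 A3 by (simp add: flowH_def flow_polytope_def)
qed

definition Gi :: "nat \<Rightarrow> nat \<Rightarrow> real \<Rightarrow> (((nat \<times> nat) \<times> (nat \<times> nat)) \<Rightarrow> real)
   \<Rightarrow> ((nat \<times> nat) option \<times> (nat \<times> nat) option) \<Rightarrow> real" where
  "Gi n m c z e = (if e \<in> edgesG n m then (case e of
       (Some (i,j), Some (i',j')) \<Rightarrow> if i = 1 \<and> i' = 1 then z ((i,j),(i',j')) + c else z ((i,j),(i',j'))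
     | (Some (i,j), None) \<Rightarrow> z ((i,j),(Suc i,j))
     | _ \<Rightarrow> 0) else 0)"

lemma Gi_h: "1 \<le> i \<Longrightarrow> i \<le> n \<Longrightarrow> j < m \<Longrightarrow>
   Gi n m c z (Some (i,j), Some (i,Suc j)) = (if i = 1 then z ((i,j),(i,Suc j)) + c else z ((i,j),(i,Suc j)))"
  by (simp add: Gi_def memG_h)
lemma Gi_v: "1 \<le> i \<Longrightarrow> i < n \<Longrightarrow> j \<le> m \<Longrightarrow>
   Gi n m c z (Some (i,j), Some (Suc i,j)) = z ((i,j),(Suc i,j))"
  by (simp add: Gi_def memG_v)
lemma Gi_s: "j \<le> m \<Longrightarrow> Gi n m c z (Some (n,j), None) = z ((n,j),(Suc n,j))"
  by (simp add: Gi_def memG_s)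

lemma Gi_s': "i = n \<Longrightarrow> j \<le> m \<Longrightarrow> Gi n m c z (Some (i,j), None) = z ((i,j),(Suc i,j))"
  by (simp add: Gi_def memG_s)

lemma memH_h: "((i,j),(i,Suc j)) \<in> edgesH n m \<longleftrightarrow> 1 \<le> i \<and> i \<le> n+1 \<and> j < m"
  by (auto simp: edgesH_def)
lemma memH_v: "((i,j),(Suc i,j)) \<in> edgesH n m \<longleftrightarrow> 1 \<le> i \<and> i \<le> n \<and> j \<le> m"
  by (auto simp: edgesH_def)

lemma bwd:
  fixes A B :: "nat \<Rightarrow> real"
  assumes n: "1 \<le> n" and m: "1 \<le> m" and B1: "0 \<le> B 1"
  defines "a' \<equiv> (\<lambda>i. if i = 1 then A 1 - B 1 else if i \<le> n then A i else 0)"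
      and "b' \<equiv> (\<lambda>i. if i = 1 then 0 else if i \<le> n then B i else (\<Sum>i=1..n. A i - B i))"
  assumes z: "z \<in> flowH n m a' b'"
  shows "Gi n m (B 1) z \<in> flowG n m A B \<and> Fm n m (B 1) (Gi n m (B 1) z) = z"
proof -
  have z0: "\<And>e. e \<notin> edgesH n m \<Longrightarrow> z e = 0" and
    nn: "\<And>e. e \<in> edgesH n m \<Longrightarrow> 0 \<le> z e" and
    nf: "\<And>v. v \<in> vertsH n m \<Longrightarrow> netflow (edgesH n m) z v = demandH n m a' b' v"
    using z by (auto simp: flowH_def flow_polytope_def)
  have rN: "\<And>j. j < m \<Longrightarrow> z ((Suc n,j),(Suc n,Suc j)) = (\<Sum>k\<le>j. z ((n,k),(Suc n,k)))"
  proof -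
    have "a' (Suc n) = 0" using n by (simp add: a'_def)
    then show "\<And>j. j < m \<Longrightarrow> z ((Suc n,j),(Suc n,Suc j)) = (\<Sum>k\<le>j. z ((n,k),(Suc n,k)))"
      using rowN_H[OF n z] by blast
  qed
  obtain m0 where m0: "m = Suc m0" using m by (cases m) auto
  have sink: "(\<Sum>k\<le>m. z ((n,k),(Suc n,k))) = (\<Sum>i=1..n. A i - B i)"
  proof -
    have "netflow (edgesH n m) z (Suc n, m) = demandH n m a' b' (Suc n, m)"
      by (intro nf) (auto simp: vertsH_def)
    then show ?thesis using rN[of m0] n unfolding m0
      by (simp add: netflowH demandH_def b'_def)
  qed
  have G1: "\<forall>e. e \<notin> edgesG n m \<longrightarrow> Gi n m (B 1) z e = 0" by (simp add: Gi_def)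
  have G2: "\<forall>e\<in>edgesG n m. 0 \<le> Gi n m (B 1) z e"
  proof
    fix e assume "e \<in> edgesG n m"
    then obtain i j where "(e = (Some (i,j), Some (i,Suc j)) \<and> 1 \<le> i \<and> i \<le> n \<and> j < m)
       \<or> (e = (Some (i,j), Some (Suc i,j)) \<and> 1 \<le> i \<and> i < n \<and> j \<le> m)
       \<or> (e = (Some (n,j), None) \<and> j \<le> m)"
      by (auto simp: edgesG_def)
    then show "0 \<le> Gi n m (B 1) z e"
    proof (elim disjE conjE)
      assume h: "e = (Some (i,j), Some (i,Suc j))" "1 \<le> i" "i \<le> n" "j < m"
      have "0 \<le> z ((i,j),(i,Suc j))" using h by (intro nn) (auto simp: memH_h)
      then show ?thesis using h B1 by (auto simp: Gi_h)
    next
      assume h: "e = (Some (i,j), Some (Suc i,j))" "1 \<le> i" "i < n" "j \<le> m"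
      have "0 \<le> z ((i,j),(Suc i,j))" using h by (intro nn) (auto simp: memH_v)
      then show ?thesis using h by (simp add: Gi_v)
    next
      assume h: "e = (Some (n,j), None)" "j \<le> m"
      have "0 \<le> z ((n,j),(Suc n,j))" using h n by (intro nn) (auto simp: memH_v)
      then show ?thesis using h by (simp add: Gi_s)
    qed
  qed
  have G3: "\<forall>v\<in>vertsG n m. netflow (edgesG n m) (Gi n m (B 1) z) v = demandG n m A B v"
  proof
    fix v assume "v \<in> vertsG n m"
    then consider "v = None" | i j where "v = Some (i,j)" "1 \<le> i" "i \<le> n" "j \<le> m"
      by (auto simp: vertsG_def)
    then show "netflow (edgesG n m) (Gi n m (B 1) z) v = demandG n m A B v"
    proof cases
      case 1
      have "(\<Sum>j\<le>m. Gi n m (B 1) z (Some (n, j), None)) = (\<Sum>k\<le>m. z ((n,k),(Suc n,k)))"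
        by (intro sum.cong) (auto simp: Gi_s)
      then show ?thesis using 1 sink by (simp add: netflowG_None demandG_def sum_subtractf)
    next
      case (2 i j)
      have h: "netflow (edgesH n m) z (i,j) = demandH n m a' b' (i,j)"
        using 2 by (intro nf) (auto simp: vertsH_def)
      consider "i = 1" | "1 < i" using 2 by linarith
      then show ?thesis
      proof cases
        case 1
        show ?thesis
        proof (cases j)
          case 0
          then show ?thesis using h 2 n m unfolding \<open>i = 1\<close> by (cases "1 < n") (auto simp: netflowH netflowG_Some Gi_h Gi_v Gi_s Gi_s' demandH_def demandG_def a'_def b'_def)
        next
          case (Suc j0)
          then show ?thesis using h 2 n m unfolding \<open>i = 1\<close> by (cases "1 < n") (auto simp: netflowH netflowG_Some Gi_h Gi_v Gi_s Gi_s' demandH_def demandG_def a'_def b'_def)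
        qed
      next
        case 3: 2
        obtain i0 where i0: "i = Suc i0" "1 \<le> i0" using 3 by (cases i) auto
        show ?thesis
        proof (cases j)
          case 0
          then show ?thesis using h 3 i0 2 n m by (cases "i < n") (auto simp: netflowH netflowG_Some Gi_h Gi_v Gi_s Gi_s' demandH_def demandG_def a'_def b'_def)
        next
          case (Suc j0)
          then show ?thesis using h 3 i0 2 n m by (cases "i < n") (auto simp: netflowH netflowG_Some Gi_h Gi_v Gi_s Gi_s' demandH_def demandG_def a'_def b'_def)
        qed
      qed
    qed
  qed
  have FG: "Fm n m (B 1) (Gi n m (B 1) z) = z"
  proof
    fix e
    show "Fm n m (B 1) (Gi n m (B 1) z) e = z e"
    proof (cases "e \<in> edgesH n m")
      case False
      then show ?thesis using z0 by (simp add: Fm_def)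
    next
      case True
      then obtain i j where "(e = ((i,j),(i,Suc j)) \<and> 1 \<le> i \<and> i \<le> n+1 \<and> j < m)
         \<or> (e = ((i,j),(Suc i,j)) \<and> 1 \<le> i \<and> i \<le> n \<and> j \<le> m)"
        by (auto simp: edgesH_def)
      then show ?thesis
      proof (elim disjE conjE)
        assume h: "e = ((i,j),(i,Suc j))" "1 \<le> i" "i \<le> n+1" "j < m"
        have "(\<Sum>k\<le>j. Gi n m (B 1) z (Some (n, k), None)) = (\<Sum>k\<le>j. z ((n,k),(Suc n,k)))"
          using h by (intro sum.cong) (auto simp: Gi_s)
        then show ?thesis using h n rN[of j] by (auto simp: Fm_h Gi_h)
      next
        assume h: "e = ((i,j),(Suc i,j))" "1 \<le> i" "i \<le> n" "j \<le> m"
        then show ?thesis by (auto simp: Fm_v Gi_v Gi_s)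
      qed
    qed
  qed
  show ?thesis using G1 G2 G3 FG by (simp add: flowG_def flow_polytope_def)
qed

lemma aff_hull_V:
  assumes "\<forall>x\<in>P. \<forall>e. e \<notin> E \<longrightarrow> x e = 0"
  shows "\<forall>y\<in>aff_hull P. \<forall>e. e \<notin> E \<longrightarrow> y e = 0"
  using assms unfolding aff_hull_def by (auto intro!: sum.neutral)

lemma generic:
  assumes aff: "\<And>S u. finite S \<Longrightarrow> sum u S = 1 \<Longrightarrow> f (\<lambda>e. \<Sum>x\<in>S. u x * x e) = (\<lambda>e. \<Sum>x\<in>S. u x * f x e)"
    and fP: "\<And>x. x \<in> P \<Longrightarrow> f x \<in> Q"
    and gQ: "\<And>z. z \<in> Q \<Longrightarrow> g z \<in> P \<and> f (g z) = z"
    and PV: "\<forall>x\<in>P. \<forall>e. e \<notin> E \<longrightarrow> x e = 0"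
    and gf: "\<And>x. \<forall>e. e \<notin> E \<longrightarrow> x e = 0 \<Longrightarrow> g (f x) = x"
    and iF: "\<And>x. x \<in> int_points \<Longrightarrow> f x \<in> int_points"
    and iG: "\<And>x. x \<in> int_points \<Longrightarrow> g x \<in> int_points"
  shows "bij_betw f P Q \<and> bij_betw f (aff_hull P \<inter> int_points) (aff_hull Q \<inter> int_points)"
proof -
  have AV: "\<forall>y\<in>aff_hull P. \<forall>e. e \<notin> E \<longrightarrow> y e = 0" using aff_hull_V[OF PV] .
  have injP: "inj_on f P" using gf PV by (metis inj_onI)
  have injA: "inj_on f (aff_hull P)" using gf AV by (metis inj_onI)
  have b1: "bij_betw f P Q"
    unfolding bij_betw_def using injP fP gQ by (auto simp: image_iff) (metis)
  have sub1: "f ` (aff_hull P \<inter> int_points) \<subseteq> aff_hull Q \<inter> int_points"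
  proof
    fix w assume "w \<in> f ` (aff_hull P \<inter> int_points)"
    then obtain y where y: "y \<in> aff_hull P" "y \<in> int_points" "w = f y" by auto
    then obtain S u where S: "finite S" "S \<subseteq> P" "sum u S = 1" "y = (\<lambda>e. \<Sum>x\<in>S. u x * x e)"
      unfolding aff_hull_def by auto
    have inS: "inj_on f S" using injP S(2) inj_on_subset by blast
    have gfS: "\<And>x. x \<in> S \<Longrightarrow> g (f x) = x" using gf PV S(2) by blast
    have "w = (\<lambda>e. \<Sum>x\<in>S. u x * f x e)" using y(3) S aff by simp
    also have "\<dots> = (\<lambda>e. \<Sum>q\<in>f ` S. u (g q) * q e)"
      by (simp add: sum.reindex[OF inS] gfS)
    finally have w1: "w = (\<lambda>e. \<Sum>q\<in>f ` S. u (g q) * q e)" .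
    have "sum (\<lambda>q. u (g q)) (f ` S) = 1" using S(3) by (simp add: sum.reindex[OF inS] gfS)
    then have "w \<in> aff_hull Q" unfolding aff_hull_def using w1 S fP
      by (intro CollectI exI[of _ "f ` S"] exI[of _ "\<lambda>q. u (g q)"]) auto
    moreover have "w \<in> int_points" using iF y by simp
    ultimately show "w \<in> aff_hull Q \<inter> int_points" by simp
  qed
  have sub2: "aff_hull Q \<inter> int_points \<subseteq> f ` (aff_hull P \<inter> int_points)"
  proof
    fix z assume "z \<in> aff_hull Q \<inter> int_points"
    then have zi: "z \<in> int_points" and "z \<in> aff_hull Q" by auto
    then obtain T v where T: "finite T" "T \<subseteq> Q" "sum v T = 1" "z = (\<lambda>e. \<Sum>q\<in>T. v q * q e)"
      unfolding aff_hull_def by auto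
    have fgT: "\<And>q. q \<in> T \<Longrightarrow> f (g q) = q" using gQ T(2) by blast
    have inT: "inj_on g T" by (metis fgT inj_onI)
    define y where "y = (\<lambda>e. \<Sum>x\<in>g ` T. v (f x) * x e)"
    have s1: "sum (\<lambda>x. v (f x)) (g ` T) = 1" using T(3) by (simp add: sum.reindex[OF inT] fgT)
    have yA: "y \<in> aff_hull P" unfolding aff_hull_def y_def using T gQ s1
      by (intro CollectI exI[of _ "g ` T"] exI[of _ "\<lambda>x. v (f x)"]) auto
    have "f y = (\<lambda>e. \<Sum>x\<in>g ` T. v (f x) * f x e)" unfolding y_def using T(1) s1 aff by simp
    also have "\<dots> = z" using T(4) by (simp add: sum.reindex[OF inT] fgT)
    finally have fy: "f y = z" .
    have "y = g z" using gf AV yA fy by metis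
    then have "y \<in> int_points" using iG zi by simp
    then show "z \<in> f ` (aff_hull P \<inter> int_points)" using yA fy by blast
  qed
  have "bij_betw f (aff_hull P \<inter> int_points) (aff_hull Q \<inter> int_points)"
    unfolding bij_betw_def using sub1 sub2 inj_on_subset[OF injA] by blast
  then show ?thesis using b1 by simp
qed

lemma GF:
  assumes n: "1 \<le> n" and x: "\<forall>e. e \<notin> edgesG n m \<longrightarrow> x e = 0"
  shows "Gi n m c (Fm n m c x) = x"
proof
  fix e
  show "Gi n m c (Fm n m c x) e = x e"
  proof (cases "e \<in> edgesG n m")
    case False
    then show ?thesis using x by (simp add: Gi_def del: split_paired_All)
  next
    case True
    then obtain i j where "(e = (Some (i,j), Some (i,Suc j)) \<and> 1 \<le> i \<and> i \<le> n \<and> j < m)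
       \<or> (e = (Some (i,j), Some (Suc i,j)) \<and> 1 \<le> i \<and> i < n \<and> j \<le> m)
       \<or> (e = (Some (n,j), None) \<and> j \<le> m)"
      by (auto simp: edgesG_def)
    then show ?thesis
      using n by (elim disjE conjE) (auto simp: Gi_h Gi_v Gi_s Fm_h Fm_v)
  qed
qed

lemma Fm_int: "c \<in> \<int> \<Longrightarrow> x \<in> int_points \<Longrightarrow> Fm n m c x \<in> int_points"
  unfolding int_points_def Fm_def by (auto split: prod.splits intro!: Ints_sum Ints_diff)

lemma Gi_int: "c \<in> \<int> \<Longrightarrow> x \<in> int_points \<Longrightarrow> Gi n m c x \<in> int_points"
  unfolding int_points_def Gi_def by (auto split: prod.splits option.splits intro!: Ints_add)

lemma affine_map_aff:
  assumes "finite S" "sum u S = 1"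
  shows "affine_map EA EB c M (\<lambda>e. \<Sum>x\<in>S. u x * x e) = (\<lambda>e. \<Sum>x\<in>S. u x * affine_map EA EB c M x e)"
proof
  fix e'
  show "affine_map EA EB c M (\<lambda>e. \<Sum>x\<in>S. u x * x e) e' = (\<Sum>x\<in>S. u x * affine_map EA EB c M x e')"
  proof (cases "e' \<in> EB")
    case True
    have "(\<Sum>x\<in>S. u x * (c e' + (\<Sum>e\<in>EA. M e' e * x e)))
        = (\<Sum>x\<in>S. u x) * c e' + (\<Sum>x\<in>S. \<Sum>e\<in>EA. M e' e * (u x * x e))"
      by (simp add: distrib_left sum.distrib sum_distrib_left sum_distrib_right mult.assoc mult.left_commute)
    also have "\<dots> = c e' + (\<Sum>e\<in>EA. M e' e * (\<Sum>x\<in>S. u x * x e))"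
      using assms by (simp add: sum.swap[of _ EA] sum_distrib_left)
    finally show ?thesis using True by (simp add: affine_map_def)
  next
    case False
    then show ?thesis by (simp add: affine_map_def)
  qed
qed

lemma finite_edgesG: "finite (edgesG n m)"
proof -
  have "edgesG n m \<subseteq> (insert None (Some ` ({0..n+1} \<times> {0..m+1}))) \<times> (insert None (Some ` ({0..n+1} \<times> {0..m+1})))"
    by (auto simp: edgesG_def)
  then show ?thesis by (rule finite_subset) auto
qed

definition cc :: "real \<Rightarrow> ((nat \<times> nat) \<times> (nat \<times> nat)) \<Rightarrow> real" where
  "cc c0 e' = (case e' of ((i,j),(i',j')) \<Rightarrow> if i = 1 \<and> i' = 1 then - c0 else 0)"

definition srcs :: "nat \<Rightarrow> ((nat \<times> nat) \<times> (nat \<times> nat)) \<Rightarrow> ((nat \<times> nat) option \<times> (nat \<times> nat) option) set" where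
  "srcs n e' = (case e' of ((i,j),(i',j')) \<Rightarrow>
     if i = n+1 then (\<lambda>k. (Some (n,k), None)) ` {..j}
     else if i' = n+1 then {(Some (n,j), None)} else {(Some (i,j), Some (i',j'))})"

definition MM :: "nat \<Rightarrow> ((nat \<times> nat) \<times> (nat \<times> nat)) \<Rightarrow> ((nat \<times> nat) option \<times> (nat \<times> nat) option) \<Rightarrow> real" where
  "MM n e' e = (if e \<in> srcs n e' then 1 else 0)"

lemma sum_srcs:
  assumes "srcs n e' \<subseteq> edgesG n m"
  shows "(\<Sum>e\<in>edgesG n m. MM n e' e * x e) = (\<Sum>e\<in>srcs n e'. x e)"
proof -
  have "(\<Sum>e\<in>edgesG n m. MM n e' e * x e) = (\<Sum>e\<in>edgesG n m. if e \<in> srcs n e' then x e else 0)"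
    by (intro sum.cong) (auto simp: MM_def)
  also have "\<dots> = (\<Sum>e\<in>edgesG n m \<inter> srcs n e'. x e)"
    by (simp add: sum.inter_restrict[OF finite_edgesG])
  also have "edgesG n m \<inter> srcs n e' = srcs n e'" using assms by blast
  finally show ?thesis .
qed

lemma affine_Fm:
  assumes n: "1 \<le> n"
  shows "affine_map (edgesG n m) (edgesH n m) (cc c0) (MM n) = Fm n m c0"
proof (intro ext)
  fix x e'
  show "affine_map (edgesG n m) (edgesH n m) (cc c0) (MM n) x e' = Fm n m c0 x e'"
  proof (cases "e' \<in> edgesH n m")
    case False
    then show ?thesis by (simp add: affine_map_def Fm_def)
  next
    case True
    have gen: "srcs n e' \<subseteq> edgesG n m \<Longrightarrow>
       affine_map (edgesG n m) (edgesH n m) (cc c0) (MM n) x e' = cc c0 e' + sum x (srcs n e')"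
      using True by (simp add: affine_map_def sum_srcs)
    from True obtain i j where "(e' = ((i,j),(i,Suc j)) \<and> 1 \<le> i \<and> i \<le> n+1 \<and> j < m)
       \<or> (e' = ((i,j),(Suc i,j)) \<and> 1 \<le> i \<and> i \<le> n \<and> j \<le> m)"
      by (auto simp: edgesH_def)
    then show ?thesis
    proof (elim disjE conjE)
      assume h: "e' = ((i,j),(i,Suc j))" "1 \<le> i" "i \<le> n+1" "j < m"
      show ?thesis
      proof (cases "i = n+1")
        case True
        have s: "srcs n e' = (\<lambda>k. (Some (n,k), None)) ` {..j}" using h True by (simp add: srcs_def)
        have "srcs n e' \<subseteq> edgesG n m" using s h by (auto simp: memG_s)
        then have "affine_map (edgesG n m) (edgesH n m) (cc c0) (MM n) x e' = cc c0 e' + (\<Sum>k\<le>j. x (Some (n,k), None))"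
          using gen s by (simp add: sum.reindex inj_on_def)
        then show ?thesis using h True n by (simp add: Fm_h cc_def)
      next
        case False
        have s: "srcs n e' = {(Some (i,j), Some (i,Suc j))}" using h False by (simp add: srcs_def)
        have "srcs n e' \<subseteq> edgesG n m" using s h False by (auto simp: memG_h)
        then have "affine_map (edgesG n m) (edgesH n m) (cc c0) (MM n) x e' = cc c0 e' + sum x (srcs n e')"
          using gen by simp
        then show ?thesis using h False n s by (simp add: Fm_h cc_def)
      qed
    next
      assume h: "e' = ((i,j),(Suc i,j))" "1 \<le> i" "i \<le> n" "j \<le> m"
      show ?thesis
      proof (cases "i = n")
        case True
        have s: "srcs n e' = {(Some (n,j), None)}" using h True by (simp add: srcs_def)
        have "srcs n e' \<subseteq> edgesG n m" using s h by (auto simp: memG_s)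
        then have "affine_map (edgesG n m) (edgesH n m) (cc c0) (MM n) x e' = cc c0 e' + sum x (srcs n e')"
          using gen by simp
        then show ?thesis using h True n s by (simp add: Fm_v cc_def)
      next
        case False
        have s: "srcs n e' = {(Some (i,j), Some (Suc i,j))}" using h False by (simp add: srcs_def)
        have "srcs n e' \<subseteq> edgesG n m" using s h False by (auto simp: memG_v)
        then have "affine_map (edgesG n m) (edgesH n m) (cc c0) (MM n) x e' = cc c0 e' + sum x (srcs n e')"
          using gen by simp
        then show ?thesis using h False n s by (simp add: Fm_v cc_def)
      qed
    qed
  qed
qed

theorem proposition7p6:
  fixes n m :: nat and a b :: "nat \<Rightarrow> nat"
  assumes "n \<ge> 1" and "m \<ge> 1"
  shows "let bn1 = (\<Sum>i=1..n. real (a i) - real (b i));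
             a' = (\<lambda>i. if i = 1 then real (a 1) - real (b 1) else if i \<le> n then real (a i) else 0);
             b' = (\<lambda>i. if i = 1 then 0 else if i \<le> n then real (b i) else bn1)
         in integrally_equivalent
              (edgesG n m) (flowG n m (\<lambda>i. real (a i)) (\<lambda>i. real (b i)))
              (edgesH n m) (flowH n m a' b')"
proof -
  let ?A = "\<lambda>i. real (a i)" and ?B = "\<lambda>i. real (b i)"
  let ?a' = "\<lambda>i. if i = 1 then ?A 1 - ?B 1 else if i \<le> n then ?A i else 0"
  let ?b' = "\<lambda>i. if i = 1 then 0 else if i \<le> n then ?B i else (\<Sum>i=1..n. ?A i - ?B i)"
  let ?P = "flowG n m ?A ?B" and ?Q = "flowH n m ?a' ?b'"
  let ?f = "Fm n m (?B 1)" and ?g = "Gi n m (?B 1)"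
  have c: "?B 1 \<in> \<int>" by simp
  have "bij_betw ?f ?P ?Q \<and> bij_betw ?f (aff_hull ?P \<inter> int_points) (aff_hull ?Q \<inter> int_points)"
  proof (rule generic[where g = ?g and E = "edgesG n m"])
    show "\<And>S u. finite S \<Longrightarrow> sum u S = 1 \<Longrightarrow> ?f (\<lambda>e. \<Sum>x\<in>S. u x * x e) = (\<lambda>e. \<Sum>x\<in>S. u x * ?f x e)"
      using affine_map_aff[where EA = "edgesG n m" and EB = "edgesH n m" and c = "cc (?B 1)" and M = "MM n"]
      unfolding affine_Fm[OF assms(1)] by blast
    show "\<And>x. x \<in> ?P \<Longrightarrow> ?f x \<in> ?Q" using fwd[OF assms, where A = ?A and B = ?B] by blast
    show "\<And>z. z \<in> ?Q \<Longrightarrow> ?g z \<in> ?P \<and> ?f (?g z) = z" using bwd[OF assms, where A = ?A and B = ?B] by simp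
    show "\<forall>x\<in>?P. \<forall>e. e \<notin> edgesG n m \<longrightarrow> x e = 0" by (simp add: flowG_def flow_polytope_def)
    show "\<And>x. \<forall>e. e \<notin> edgesG n m \<longrightarrow> x e = 0 \<Longrightarrow> ?g (?f x) = x" using GF[OF assms(1)] by blast
    show "\<And>x. x \<in> int_points \<Longrightarrow> ?f x \<in> int_points" using Fm_int[OF c] by blast
    show "\<And>x. x \<in> int_points \<Longrightarrow> ?g x \<in> int_points" using Gi_int[OF c] by blast
  qed
  then show ?thesis
    unfolding Let_def integrally_equivalent_def
    by (intro exI[of _ "cc (?B 1)"] exI[of _ "MM n"]) (simp add: affine_Fm[OF assms(1)])
qed

end
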